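(* Let $\mathcal{A}:\mathbb{R}^{n_1\times n_2}\to\mathbb{R}^m$ be linear, $y\in\mathbb{R}^m$, $R\ge1$, $\alpha,\beta>0$, and let $(u^1_{\alpha,\beta},\dots,u^R_{\alpha,\beta},v^1_{\alpha,\beta},\dots,v^R_{\alpha,\beta})$ be a global minimizer of $J^R_{\alpha,\beta}$. Let $\gamma>0$ and $r\in\{1,\dots,R\}$. If $v^r_{\alpha,\beta}\neq0$ and $\|v^r_{\alpha,\beta}\|_2\ge\|y\|_2^2/\gamma$, then $$\frac{\|v^r_{\alpha,\beta}\|_1}{\|v^r_{\alpha,\beta}\|_2}<\frac{\gamma}{\beta}.$$
   Context: For $y\in\mathbb{R}^m$ and $\alpha,\beta>0$, the functional $J^R_{\alpha,\beta}:(\mathbb{R}^{n_1})^R\times(\mathbb{R}^{n_2})^R\to\mathbb{R}$ is $$J^R_{\alpha,\beta}(u^1,\dots,u^R,v^1,\dots,v^R)=\Big\|y-\mathcal{A}\Big(\sum_{r=1}^Ru^r(v^r)^T\Big)\Big\|_2^2+\alpha\sum_{r=1}^R\|u^r\|_2^2+\beta\sum_{r=1}^R\|v^r\|_1.$$ *)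

theory Defs
  imports "HOL-Analysis.Analysis"
begin

text \<open>Matrices in R^(n1 x n2) are represented as real^'n2^'n1 (rows indexed by 'n1).\<close>

definition outer :: "real^'n1 \<Rightarrow> real^'n2 \<Rightarrow> real^'n2^'n1" where
  "outer u v = (\<chi> i j. u $ i * v $ j)"

definition l1norm :: "real^'n \<Rightarrow> real" where
  "l1norm v = (\<Sum>j\<in>UNIV. \<bar>v $ j\<bar>)"

text \<open>The functional J^R_{alpha,beta}; the R-tuples are functions on indices 1..R
  (values outside {1..R} are irrelevant).\<close>
definition J :: "(real^'n2^'n1 \<Rightarrow> real^'m) \<Rightarrow> real^'m \<Rightarrow> real \<Rightarrow> real \<Rightarrow> nat
    \<Rightarrow> (nat \<Rightarrow> real^'n1) \<Rightarrow> (nat \<Rightarrow> real^'n2) \<Rightarrow> real" where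
  "J A y \<alpha> \<beta> R u v =
     (norm (y - A (\<Sum>r=1..R. outer (u r) (v r))))\<^sup>2
     + \<alpha> * (\<Sum>r=1..R. (norm (u r))\<^sup>2)
     + \<beta> * (\<Sum>r=1..R. l1norm (v r))"

end

theory Submission
  imports Defs
begin

lemma l1_ge_norm: "norm (v::real^'n) \<le> l1norm v"
  unfolding l1norm_def by (rule norm_le_l1_cart)

lemma l1_nonneg: "0 \<le> l1norm (v::real^'n)"
  unfolding l1norm_def by (simp add: sum_nonneg)

theorem mainTheorem4:
  fixes A :: "real^'n2^'n1 \<Rightarrow> real^'m"
    and y :: "real^'m"
    and R r :: nat
    and \<alpha> \<beta> \<gamma> :: real
    and u :: "nat \<Rightarrow> real^'n1" and v :: "nat \<Rightarrow> real^'n2"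
  assumes "linear A"
    and "R \<ge> 1"
    and "\<alpha> > 0" and "\<beta> > 0"
    and "\<forall>u' v'. J A y \<alpha> \<beta> R u v \<le> J A y \<alpha> \<beta> R u' v'"
    and "\<gamma> > 0"
    and "r \<in> {1..R}"
    and "v r \<noteq> 0"
    and "norm (v r) \<ge> (norm y)\<^sup>2 / \<gamma>"
  shows "l1norm (v r) / norm (v r) < \<gamma> / \<beta>"
proof (rule ccontr)
  assume "\<not> ?thesis"
  hence c: "l1norm (v r) / norm (v r) \<ge> \<gamma> / \<beta>" by simp
  have np: "norm (v r) > 0" using assms(8) by simp
  have "\<beta> * l1norm (v r) \<ge> \<gamma> * norm (v r)"
    using c np assms(4) by (simp add: field_simps)
  moreover have "\<gamma> * norm (v r) \<ge> (norm y)\<^sup>2" using assms(9) assms(6) by (simp add: field_simps)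
  ultimately have b1: "\<beta> * l1norm (v r) \<ge> (norm y)\<^sup>2" by linarith
  have A0: "A 0 = 0" using assms(1) by (simp add: linear_0)
  have o0: "outer (0::real^'n1) (0::real^'n2) = 0" unfolding outer_def by (simp add: vec_eq_iff)
  have J0: "J A y \<alpha> \<beta> R (\<lambda>_. 0) (\<lambda>_. 0) = (norm y)\<^sup>2"
    unfolding J_def using A0 o0 by (simp add: l1norm_def)
  have Jle: "J A y \<alpha> \<beta> R u v \<le> (norm y)\<^sup>2" using assms(5) J0 by metis
  define res where "res = (norm (y - A (\<Sum>r=1..R. outer (u r) (v r))))\<^sup>2"
  define U where "U = (\<Sum>r=1..R. (norm (u r))\<^sup>2)"
  define S where "S = (\<Sum>r=1..R. l1norm (v r))"
  have JE: "J A y \<alpha> \<beta> R u v = res + \<alpha> * U + \<beta> * S"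
    unfolding J_def res_def U_def S_def by simp
  have Sge: "l1norm (v r) \<le> S" unfolding S_def
    using assms(7) by (intro member_le_sum) (auto simp: l1_nonneg)
  have Un: "U \<ge> 0" unfolding U_def by (simp add: sum_nonneg)
  have rn: "res \<ge> 0" unfolding res_def by simp
  have "\<beta> * l1norm (v r) \<le> \<beta> * S" using Sge assms(4) by simp
  hence "res + \<alpha> * U \<le> 0" using JE Jle b1 by linarith
  hence "\<alpha> * U = 0" using rn Un assms(3) by (smt (verit) mult_nonneg_nonneg)
  hence "U = 0" using assms(3) by simp
  hence uz: "\<forall>i\<in>{1..R}. u i = 0" unfolding U_def
    by (subst (asm) sum_nonneg_eq_0_iff) auto
  have "(\<Sum>r=1..R. outer (u r) (v r)) = 0"
    using uz by (intro sum.neutral) (auto simp: outer_def vec_eq_iff)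
  hence "res = (norm y)\<^sup>2" unfolding res_def using A0 by simp
  hence "\<beta> * S \<le> 0" using JE Jle Un assms(3) by (smt (verit) mult_nonneg_nonneg)
  moreover have "\<beta> * S > 0" using Sge l1_ge_norm[of "v r"] np assms(4) by (intro mult_pos_pos) linarith+
  ultimately show False by simp
qed

end
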